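(* Let $P$ be a finite poset with height function $h$ and let $D\ge1$ be an integer. Then $$\mathsf{Z}_{P,Dh}(x)=\mathsf{Z}_{P,h}\big|_{q=q^D}\!\left(\frac{(1+(q-1)x)^D-1}{q^D-1}\right),$$ where $\mathsf{Z}_{P,h}|_{q=q^D}$ denotes the polynomial obtained from $\mathsf{Z}_{P,h}$ by replacing $q$ by $q^D$ in its coefficients.
   Context: $q$ is an indeterminate; $[n]_q=(q^n-1)/(q-1)$. A height function on a finite poset $P$ is $h:P\to\mathbb{N}$ with $h(x)<h(y)$ whenever $y$ covers $x$ (so $Dh$ is again one). The $q$-Zeta polynomial $\mathsf{Z}_{P,h}\in\mathbb{Q}(q)[x]$ is the unique polynomial with $\mathsf{Z}_{P,h}([n]_q)=\sum_{e_1\le\cdots\le e_{n-1}\text{ in }P}q^{h(e_1)+\cdots+h(e_{n-1})}$ for all integers $n\ge2$ (such a polynomial exists). *)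

theory Defs
  imports "HOL-Computational_Algebra.Computational_Algebra" "HOL-Computational_Algebra.Field_as_Ring"
begin

type_synonym ratfun = "rat poly fract"

definition qvar :: ratfun where
  "qvar = to_fract [:0, 1:]"

definition qint :: "nat \<Rightarrow> ratfun" where
  "qint n = (qvar ^ n - 1) / (qvar - 1)"

text \<open>Substitution q := q^D in a rational function.\<close>
definition qsubst :: "nat \<Rightarrow> ratfun \<Rightarrow> ratfun" where
  "qsubst D f = (case quot_of_fract f of (a, b) \<Rightarrow>
      Fract (pcompose a (monom 1 D)) (pcompose b (monom 1 D)))"

definition covers :: "'a::order set \<Rightarrow> 'a \<Rightarrow> 'a \<Rightarrow> bool" where
  "covers P x y \<longleftrightarrow> x \<in> P \<and> y \<in> P \<and> x < y \<and> \<not> (\<exists>z\<in>P. x < z \<and> z < y)"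

definition height_function :: "'a::order set \<Rightarrow> ('a \<Rightarrow> nat) \<Rightarrow> bool" where
  "height_function P h \<longleftrightarrow> (\<forall>x y. covers P x y \<longrightarrow> h x < h y)"

definition multichain_sum :: "'a::order set \<Rightarrow> ('a \<Rightarrow> nat) \<Rightarrow> nat \<Rightarrow> ratfun" where
  "multichain_sum P h n =
     (\<Sum>es\<in>{es. length es = n - 1 \<and> set es \<subseteq> P \<and> sorted_wrt (\<le>) es}.
        qvar ^ sum_list (map h es))"

definition qZeta :: "'a::order set \<Rightarrow> ('a \<Rightarrow> nat) \<Rightarrow> ratfun poly" where
  "qZeta P h = (THE Z. \<forall>n\<ge>2. poly Z (qint n) = multichain_sum P h n)"

end

theory Submission
  imports Defs
begin

lemma qsubst_Fract:
  fixes a b :: "rat poly"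
  assumes "b \<noteq> 0" "D \<ge> 1"
  shows "qsubst D (Fract a b) = Fract (pcompose a (monom 1 D)) (pcompose b (monom 1 D))"
proof -
  obtain a' b' where q: "quot_of_fract (Fract a b) = (a', b')" by (cases "quot_of_fract (Fract a b)")
  have b'0: "b' \<noteq> 0"
    using quot_of_fract_in_normalized_fracts[of "Fract a b"] q
    by (metis not_normalized_fracts_0_denom)
  have "Fract a' b' = Fract a b" using Fract_quot_of_fract[of "Fract a b"] q by simp
  hence e: "a' * b = a * b'" using assms b'0 by (simp add: eq_fract)
  have dm: "degree (monom (1::rat) D) > 0" using assms by (simp add: degree_monom_eq)
  have nz: "pcompose p (monom 1 D) \<noteq> 0" if "p \<noteq> 0" for p :: "rat poly"
    using pcompose_eq_0_iff[OF dm] that by simp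
  have "pcompose a' (monom 1 D) * pcompose b (monom 1 D) = pcompose a (monom 1 D) * pcompose b' (monom 1 D)"
    using e by (metis pcompose_mult)
  thus ?thesis unfolding qsubst_def q using nz[OF b'0] nz[OF assms(1)]
    by (simp add: eq_fract)
qed

lemma pc_nz: "p \<noteq> 0 \<Longrightarrow> D \<ge> 1 \<Longrightarrow> pcompose (p::rat poly) (monom 1 D) \<noteq> 0"
  using pcompose_eq_0_iff[of "monom (1::rat) D" p] by (simp add: degree_monom_eq)

lemma qpow: "qvar ^ k = Fract (monom 1 k) 1"
  unfolding qvar_def to_fract_def
  by (induction k) (auto simp: One_fract_def monom_Suc)

lemma qsubst_add: assumes "D \<ge> 1" shows "qsubst D (x + y) = qsubst D x + qsubst D y"
proof -
  obtain a b where x: "x = Fract a b" "b \<noteq> 0" by (cases x) auto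
  obtain c d where y: "y = Fract c d" "d \<noteq> 0" by (cases y) auto
  show ?thesis using x y assms pc_nz[OF x(2) assms] pc_nz[OF y(2) assms] by (simp add: qsubst_Fract pcompose_add pcompose_mult)
qed

lemma qsubst_mult: assumes "D \<ge> 1" shows "qsubst D (x * y) = qsubst D x * qsubst D y"
proof -
  obtain a b where x: "x = Fract a b" "b \<noteq> 0" by (cases x) auto
  obtain c d where y: "y = Fract c d" "d \<noteq> 0" by (cases y) auto
  show ?thesis using x y assms by (simp add: qsubst_Fract pcompose_mult)
qed

lemma qsubst_0: assumes "D \<ge> 1" shows "qsubst D 0 = 0"
  using assms by (simp add: Zero_fract_def qsubst_Fract pcompose_1 eq_fract)

lemma qsubst_1: assumes "D \<ge> 1" shows "qsubst D 1 = 1"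
  using assms by (simp add: One_fract_def qsubst_Fract pcompose_1)

lemma pcompose_monom1: "pcompose (monom (1::rat) k) q = q ^ k"
  by (induction k) (auto simp: monom_Suc pcompose_pCons pcompose_1)

lemma qsubst_qpow: assumes "D \<ge> 1" shows "qsubst D (qvar ^ k) = qvar ^ (D * k)"
  using assms by (simp add: qpow qsubst_Fract pcompose_1 pcompose_monom1 monom_power)


lemma qsubst_diff: assumes "D \<ge> 1" shows "qsubst D (x - y) = qsubst D x - qsubst D y"
  using qsubst_add[OF assms, of "x - y" y] by (simp add: algebra_simps)

lemma qsubst_sum: assumes "D \<ge> 1" shows "qsubst D (sum f A) = (\<Sum>a\<in>A. qsubst D (f a))"
  by (induction A rule: infinite_finite_induct) (auto simp: qsubst_0[OF assms] qsubst_add[OF assms])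

lemma poly_map_qsubst: assumes "D \<ge> 1"
  shows "poly (map_poly (qsubst D) p) (qsubst D x) = qsubst D (poly p x)"
  by (induction p) (auto simp: map_poly_pCons qsubst_0[OF assms] qsubst_add[OF assms] qsubst_mult[OF assms])

lemma qpow_inj: "qvar ^ a = qvar ^ b \<longleftrightarrow> a = b"
proof
  assume "qvar ^ a = qvar ^ b"
  hence "monom (1::rat) a = monom 1 b" by (simp add: qpow eq_fract)
  thus "a = b" by (metis coeff_monom one_neq_zero)
qed simp

lemma qpow_ne1: "k \<ge> 1 \<Longrightarrow> qvar ^ k \<noteq> 1"
  using qpow_inj[of k 0] by simp

lemma qvar_ne1: "qvar \<noteq> 1" using qpow_ne1[of 1] by simp

lemma qvar_ne0: "qvar \<noteq> 0" proof
  assume "qvar = 0"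
  hence "Fract (monom (1::rat) 1) 1 = Fract 0 1" using qpow[of 1] by (simp add: Zero_fract_def)
  hence "monom (1::rat) 1 = 0" by (simp add: eq_fract)
  thus False by simp
qed

lemma qint_pow: "1 + (qvar - 1) * qint n = qvar ^ n"
proof -
  have "qvar - 1 \<noteq> 0" using qvar_ne1 by simp
  thus ?thesis unfolding qint_def by simp
qed

lemma qsubst_qint: assumes "D \<ge> 1" shows "qsubst D (qint n) = (qvar ^ (D * n) - 1) / (qvar ^ D - 1)"
proof -
  have "qvar - 1 \<noteq> 0" using qvar_ne1 by simp
  hence "qint n * (qvar - 1) = qvar ^ n - 1" unfolding qint_def by simp
  hence "qsubst D (qint n * (qvar - 1)) = qsubst D (qvar ^ n - 1)" by simp
  hence "qsubst D (qint n) * (qvar ^ D - 1) = qvar ^ (D * n) - 1"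
    unfolding qsubst_mult[OF assms] qsubst_diff[OF assms] qsubst_1[OF assms] qsubst_qpow[OF assms]
    using qsubst_qpow[OF assms, of 1] by simp
  thus ?thesis using qpow_ne1[OF assms] by (simp add: field_simps)
qed


definition SL :: "'a::order set \<Rightarrow> nat \<Rightarrow> 'a list set" where
  "SL P L = {es. length es = L \<and> set es \<subseteq> P \<and> sorted_wrt (\<le>) es}"

definition FF :: "('a::order \<Rightarrow> nat) \<Rightarrow> 'a set \<Rightarrow> nat \<Rightarrow> ratfun" where
  "FF h P L = (\<Sum>es\<in>SL P L. qvar ^ sum_list (map h es))"

lemma SL_finite: "finite P \<Longrightarrow> finite (SL P L)"
  by (rule finite_subset[OF _ finite_lists_length_eq[of P L]]) (auto simp: SL_def)

lemma SL_Suc: "SL P (Suc L) = (\<Union>x\<in>P. Cons x ` SL {y\<in>P. x \<le> y} L)"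
proof (intro equalityI subsetI)
  fix es assume "es \<in> SL P (Suc L)"
  then obtain x xs where es: "es = x # xs" "length xs = L" "x \<in> P" "set xs \<subseteq> P" "\<forall>y\<in>set xs. x \<le> y" "sorted_wrt (\<le>) xs"
    by (auto simp: SL_def length_Suc_conv)
  hence "xs \<in> SL {y\<in>P. x \<le> y} L" by (auto simp: SL_def)
  thus "es \<in> (\<Union>x\<in>P. Cons x ` SL {y\<in>P. x \<le> y} L)" using es by blast
qed (auto simp: SL_def)

lemma FF_0: "FF h P 0 = 1"
proof -
  have "SL P 0 = {[]}" by (auto simp: SL_def)
  thus ?thesis by (simp add: FF_def)
qed

lemma FF_Suc:
  assumes "finite P"
  shows "FF h P (Suc L) = (\<Sum>x\<in>P. qvar ^ h x * FF h {y\<in>P. x \<le> y} L)"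
proof -
  have "FF h P (Suc L) = (\<Sum>x\<in>P. \<Sum>es\<in>Cons x ` SL {y\<in>P. x \<le> y} L. qvar ^ sum_list (map h es))"
    unfolding FF_def SL_Suc
    by (rule sum.UNION_disjoint) (auto simp: assms SL_finite)
  also have "\<dots> = (\<Sum>x\<in>P. qvar ^ h x * FF h {y\<in>P. x \<le> y} L)"
  proof (rule sum.cong[OF refl])
    fix x assume "x \<in> P"
    have "(\<Sum>es\<in>Cons x ` SL {y\<in>P. x \<le> y} L. qvar ^ sum_list (map h es)) =
      (\<Sum>es\<in>SL {y\<in>P. x \<le> y} L. qvar ^ sum_list (map h (x # es)))"
      by (subst sum.reindex) auto
    also have "\<dots> = qvar ^ h x * FF h {y\<in>P. x \<le> y} L"
      by (simp add: FF_def power_add sum_distrib_left)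
    finally show "(\<Sum>es\<in>Cons x ` SL {y\<in>P. x \<le> y} L. qvar ^ sum_list (map h es)) =
      qvar ^ h x * FF h {y\<in>P. x \<le> y} L" .
  qed
  finally show ?thesis .
qed

lemma FF_rec:
  assumes "finite P" "x \<in> P"
  shows "FF h {y\<in>P. x \<le> y} (Suc L) = qvar ^ h x * FF h {y\<in>P. x \<le> y} L + FF h {y\<in>P. x < y} (Suc L)"
proof -
  have ins: "{y\<in>P. x \<le> y} = insert x {y\<in>P. x < y}" using assms by auto
  have fin: "finite {y\<in>P. x < y}" using assms by simp
  have e1: "{y \<in> {y\<in>P. x \<le> y}. x \<le> y} = {y\<in>P. x \<le> y}" by auto
  have e2: "{ya \<in> {y\<in>P. x \<le> y}. y \<le> ya} = {ya \<in> {y\<in>P. x < y}. y \<le> ya}" if "y \<in> {y\<in>P. x < y}" for y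
    using that by (auto intro: order.strict_trans2)
  have "FF h {y\<in>P. x \<le> y} (Suc L) = (\<Sum>y\<in>insert x {y\<in>P. x < y}. qvar ^ h y * FF h {ya\<in>{y\<in>P. x \<le> y}. y \<le> ya} L)"
    using FF_Suc[of "{y\<in>P. x \<le> y}" h L] assms ins by simp
  also have "\<dots> = qvar ^ h x * FF h {y\<in>P. x \<le> y} L + (\<Sum>y\<in>{y\<in>P. x < y}. qvar ^ h y * FF h {ya\<in>{y\<in>P. x < y}. y \<le> ya} L)"
  proof -
    have "(\<Sum>y\<in>{y\<in>P. x < y}. qvar ^ h y * FF h {ya\<in>{y\<in>P. x \<le> y}. y \<le> ya} L)
        = (\<Sum>y\<in>{y\<in>P. x < y}. qvar ^ h y * FF h {ya\<in>{y\<in>P. x < y}. y \<le> ya} L)"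
      by (rule sum.cong[OF refl], subst e2, assumption, rule refl)
    moreover have "(\<Sum>y\<in>insert x {y\<in>P. x < y}. qvar ^ h y * FF h {ya\<in>{y\<in>P. x \<le> y}. y \<le> ya} L)
       = qvar ^ h x * FF h {ya\<in>{y\<in>P. x \<le> y}. x \<le> ya} L + (\<Sum>y\<in>{y\<in>P. x < y}. qvar ^ h y * FF h {ya\<in>{y\<in>P. x \<le> y}. y \<le> ya} L)"
      by (rule sum.insert[OF fin]) simp
    ultimately show ?thesis unfolding e1 by simp
  qed
  also have "(\<Sum>y\<in>{y\<in>P. x < y}. qvar ^ h y * FF h {ya\<in>{y\<in>P. x < y}. y \<le> ya} L) = FF h {y\<in>P. x < y} (Suc L)"
    using FF_Suc[OF fin, of h L] by simp
  finally show ?thesis .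
qed

definition Rep :: "nat set \<Rightarrow> (nat \<Rightarrow> ratfun) \<Rightarrow> bool" where
  "Rep S f \<longleftrightarrow> (\<exists>c. \<forall>L. f L = (\<Sum>j\<in>S. c j * (qvar ^ j) ^ L))"

lemma Rep_mono: assumes "Rep S f" "S \<subseteq> T" "finite T" shows "Rep T f"
proof -
  obtain c where c: "\<And>L. f L = (\<Sum>j\<in>S. c j * (qvar ^ j) ^ L)" using assms(1) Rep_def by auto
  define c' where "c' j = (if j \<in> S then c j else 0)" for j
  have "f L = (\<Sum>j\<in>T. c' j * (qvar ^ j) ^ L)" for L
    unfolding c c'_def using assms(2,3)
    by (subst sum.mono_neutral_cong_right[of T S]) auto
  thus ?thesis unfolding Rep_def by blast
qed

lemma Rep_add: assumes "Rep S f" "Rep S g" shows "Rep S (\<lambda>L. f L + g L)"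
proof -
  obtain c where c: "\<And>L. f L = (\<Sum>j\<in>S. c j * (qvar ^ j) ^ L)" using assms(1) Rep_def by auto
  obtain d where d: "\<And>L. g L = (\<Sum>j\<in>S. d j * (qvar ^ j) ^ L)" using assms(2) Rep_def by auto
  have "f L + g L = (\<Sum>j\<in>S. (c j + d j) * (qvar ^ j) ^ L)" for L
    unfolding c d by (simp add: sum.distrib algebra_simps)
  thus ?thesis unfolding Rep_def by (intro exI[of _ "\<lambda>j. c j + d j"]) simp
qed

lemma Rep_scale: assumes "Rep S f" shows "Rep S (\<lambda>L. k * f L)"
proof -
  obtain c where c: "\<And>L. f L = (\<Sum>j\<in>S. c j * (qvar ^ j) ^ L)" using assms(1) Rep_def by auto
  have "k * f L = (\<Sum>j\<in>S. (k * c j) * (qvar ^ j) ^ L)" for L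
    unfolding c by (simp add: sum_distrib_left algebra_simps)
  thus ?thesis unfolding Rep_def by (intro exI[of _ "\<lambda>j. k * c j"]) simp
qed

lemma Rep_zero: "Rep S (\<lambda>L. 0)"
  unfolding Rep_def by (rule exI[of _ "\<lambda>_. 0"]) simp

lemma Rep_sum: assumes "\<And>x. x \<in> X \<Longrightarrow> Rep S (f x)" shows "Rep S (\<lambda>L. \<Sum>x\<in>X. f x L)"
  using assms
proof (induction X rule: infinite_finite_induct)
  case (infinite A) thus ?case by (simp add: Rep_zero)
next
  case empty thus ?case by (simp add: Rep_zero)
next
  case (insert x F) thus ?case by (simp add: Rep_add)
qed

lemma Rep_rec:
  assumes "finite S" "a \<notin> S" "Rep S g" "\<And>L. G (Suc L) = qvar ^ a * G L + g L"
  shows "Rep (insert a S) G"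
proof -
  obtain c where c: "\<And>L. g L = (\<Sum>j\<in>S. c j * (qvar ^ j) ^ L)" using assms(3) Rep_def by auto
  have ne: "qvar ^ j - qvar ^ a \<noteq> 0" if "j \<in> S" for j
    using that assms(2) qpow_inj[of j a] by auto
  define b where "b j = c j / (qvar ^ j - qvar ^ a)" for j
  define C where "C = G 0 - (\<Sum>j\<in>S. b j)"
  have bj: "qvar ^ a * b j + c j = b j * qvar ^ j" if "j \<in> S" for j
    using ne[OF that] unfolding b_def by (simp add: field_simps)
  have main: "G L = C * (qvar ^ a) ^ L + (\<Sum>j\<in>S. b j * (qvar ^ j) ^ L)" for L
  proof (induction L)
    case 0 thus ?case by (simp add: C_def)
  next
    case (Suc L)
    have "G (Suc L) = qvar ^ a * (C * (qvar ^ a) ^ L + (\<Sum>j\<in>S. b j * (qvar ^ j) ^ L)) + (\<Sum>j\<in>S. c j * (qvar ^ j) ^ L)"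
      using assms(4) Suc c by simp
    also have "\<dots> = C * (qvar ^ a) ^ Suc L + (\<Sum>j\<in>S. (qvar ^ a * b j + c j) * (qvar ^ j) ^ L)"
      by (simp add: sum_distrib_left sum.distrib algebra_simps)
    also have "(\<Sum>j\<in>S. (qvar ^ a * b j + c j) * (qvar ^ j) ^ L) = (\<Sum>j\<in>S. b j * (qvar ^ j) ^ Suc L)"
      by (rule sum.cong) (auto simp: bj)
    finally show ?case .
  qed
  define c' where "c' j = (if j = a then C else b j)" for j
  have "G L = (\<Sum>j\<in>insert a S. c' j * (qvar ^ j) ^ L)" for L
    unfolding main using assms(1,2) by (simp add: c'_def, intro sum.cong) auto
  thus ?thesis unfolding Rep_def by blast
qed


lemma height_mono:
  assumes "finite P" "height_function P h"
  shows "x \<in> P \<Longrightarrow> y \<in> P \<Longrightarrow> x < y \<Longrightarrow> h x < h y"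
proof (induction "card {z\<in>P. x < z \<and> z < y}" arbitrary: x y rule: less_induct)
  case less
  show ?case
  proof (cases "\<exists>z\<in>P. x < z \<and> z < y")
    case False
    hence "covers P x y" using less.prems by (simp add: covers_def)
    thus ?thesis using assms(2) by (simp add: height_function_def)
  next
    case True
    then obtain z where z: "z \<in> P" "x < z" "z < y" by blast
    have fin: "finite {w\<in>P. x < w \<and> w < y}" using assms(1) by simp
    have "{w\<in>P. x < w \<and> w < z} \<subset> {w\<in>P. x < w \<and> w < y}" using z by (auto dest: order.strict_trans)
    hence c1: "card {w\<in>P. x < w \<and> w < z} < card {w\<in>P. x < w \<and> w < y}" by (rule psubset_card_mono[OF fin])
    have "{w\<in>P. z < w \<and> w < y} \<subset> {w\<in>P. x < w \<and> w < y}" using z by (auto dest: order.strict_trans)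
    hence c2: "card {w\<in>P. z < w \<and> w < y} < card {w\<in>P. x < w \<and> w < y}" by (rule psubset_card_mono[OF fin])
    have "h x < h z" using less.hyps[OF c1] less.prems z by blast
    moreover have "h z < h y" using less.hyps[OF c2] less.prems z by blast
    ultimately show ?thesis by simp
  qed
qed

lemma FF_rep:
  "finite P \<Longrightarrow> (\<forall>x\<in>P. \<forall>y\<in>P. x < y \<longrightarrow> h x < h y) \<Longrightarrow> Rep (h ` P) (\<lambda>L. FF h P (Suc L))"
proof (induction "card P" arbitrary: P rule: less_induct)
  case less
  have G: "Rep (h ` P) (\<lambda>L. FF h {y\<in>P. x \<le> y} L)" if x: "x \<in> P" for x
  proof -
    let ?P' = "{y\<in>P. x < y}"
    have "?P' \<subset> P" using x by auto
    hence c: "card ?P' < card P" using less.prems(1) by (rule psubset_card_mono[rotated])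
    have "Rep (h ` ?P') (\<lambda>L. FF h ?P' (Suc L))"
      using less.hyps[OF c] less.prems by auto
    moreover have "h x \<notin> h ` ?P'" using less.prems x by force
    ultimately have "Rep (insert (h x) (h ` ?P')) (\<lambda>L. FF h {y\<in>P. x \<le> y} L)"
      using less.prems(1) x by (intro Rep_rec) (auto simp: FF_rec)
    thus ?thesis by (rule Rep_mono) (use x less.prems(1) in auto)
  qed
  have "Rep (h ` P) (\<lambda>L. \<Sum>x\<in>P. qvar ^ h x * FF h {y\<in>P. x \<le> y} L)"
    by (rule Rep_sum, rule Rep_scale, rule G)
  thus ?case using FF_Suc[OF less.prems(1)] by simp
qed

lemma multichain_FF: "multichain_sum P h n = FF h P (n - 1)"
  by (simp add: multichain_sum_def FF_def SL_def)

lemma exists_Z: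
  assumes "Rep S (\<lambda>L. FF h P (Suc L))"
  shows "\<exists>Z. \<forall>n\<ge>2. poly Z (qint n) = multichain_sum P h n"
proof -
  obtain c where c: "\<And>L. FF h P (Suc L) = (\<Sum>j\<in>S. c j * (qvar ^ j) ^ L)" using assms Rep_def by auto
  define Z where "Z = (\<Sum>j\<in>S. smult (c j / qvar ^ (2 * j)) ([:1, qvar - 1:] ^ j))"
  have "poly Z (qint n) = multichain_sum P h n" if n: "n \<ge> 2" for n
  proof -
    have "multichain_sum P h n = FF h P (Suc (n - 2))" using n by (simp add: multichain_FF numeral_2_eq_2 Suc_diff_Suc)
    also have "\<dots> = (\<Sum>j\<in>S. c j * (qvar ^ j) ^ (n - 2))" by (rule c)
    also have "\<dots> = poly Z (qint n)"
      unfolding Z_def poly_sum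
    proof (rule sum.cong[OF refl])
      fix j
      have "poly [:1, qvar - 1:] (qint n) = qvar ^ n" using qint_pow[of n] by (simp add: algebra_simps)
      hence "poly (smult (c j / qvar ^ (2 * j)) ([:1, qvar - 1:] ^ j)) (qint n) = c j / qvar ^ (2 * j) * (qvar ^ n) ^ j"
        by (simp add: poly_power)
      also have "(qvar ^ n) ^ j = qvar ^ (2 * j) * (qvar ^ j) ^ (n - 2)"
        using n by (simp flip: power_mult power_add) (simp add: algebra_simps flip: add_mult_distrib)
      finally show "c j * (qvar ^ j) ^ (n - 2) = poly (smult (c j / qvar ^ (2 * j)) ([:1, qvar - 1:] ^ j)) (qint n)"
        using qvar_ne0 by simp
    qed
    finally show ?thesis by simp
  qed
  thus ?thesis by blast
qed

lemma qint_inj: "qint n = qint m \<Longrightarrow> n = m"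
  using qint_pow[of n] qint_pow[of m] qpow_inj[of n m] by metis

lemma Z_unique:
  fixes Z1 Z2 :: "ratfun poly"
  assumes "\<forall>n\<ge>2. poly Z1 (qint n) = f n" "\<forall>n\<ge>2. poly Z2 (qint n) = f n"
  shows "Z1 = Z2"
proof (rule ccontr)
  assume "Z1 \<noteq> Z2"
  hence "Z1 - Z2 \<noteq> 0" by simp
  hence fin: "finite {x. poly (Z1 - Z2) x = 0}" by (rule poly_roots_finite)
  have "qint ` {2..} \<subseteq> {x. poly (Z1 - Z2) x = 0}" using assms by auto
  hence "finite (qint ` {2..})" using fin finite_subset by blast
  moreover have "inj_on qint {2..}" by (auto intro: inj_onI qint_inj)
  ultimately have "finite {2::nat..}" using finite_imageD by blast
  thus False using infinite_Ici[of "2::nat"] by simp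
qed

lemma qZeta_eq:
  assumes "\<forall>n\<ge>2. poly Z (qint n) = multichain_sum P h n"
  shows "qZeta P h = Z"
  unfolding qZeta_def
proof (rule the_equality)
  show "\<forall>n\<ge>2. poly Z (qint n) = multichain_sum P h n" by (rule assms)
next
  fix Z' assume "\<forall>n\<ge>2. poly Z' (qint n) = multichain_sum P h n"
  thus "Z' = Z" using Z_unique[of Z' "multichain_sum P h" Z] assms by blast
qed

theorem mainTheorem17:
  fixes P :: "'a::order set" and h :: "'a \<Rightarrow> nat" and D :: nat
  assumes "finite P" and "height_function P h" and "D \<ge> 1"
  shows "qZeta P (\<lambda>x. D * h x) =
    pcompose (map_poly (qsubst D) (qZeta P h))
      (smult (inverse (qvar ^ D - 1)) ([:1, qvar - 1:] ^ D - 1))"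
proof -
  have "Rep (h ` P) (\<lambda>L. FF h P (Suc L))"
    using FF_rep[OF assms(1)] height_mono[OF assms(1,2)] by blast
  then obtain Z where Z: "\<forall>n\<ge>2. poly Z (qint n) = multichain_sum P h n" using exists_Z by blast
  hence qZ: "qZeta P h = Z" by (rule qZeta_eq)
  show ?thesis unfolding qZ
  proof (rule qZeta_eq, intro allI impI)
    fix n :: nat assume n: "n \<ge> 2"
    have "poly [:1, qvar - 1:] (qint n) = qvar ^ n" using qint_pow[of n] by (simp add: algebra_simps)
    hence "poly (smult (inverse (qvar ^ D - 1)) ([:1, qvar - 1:] ^ D - 1)) (qint n) = inverse (qvar ^ D - 1) * ((qvar ^ n) ^ D - 1)"
      by (simp add: poly_power)
    also have "\<dots> = qsubst D (qint n)"
      using qsubst_qint[OF assms(3), of n] by (simp add: field_simps flip: power_mult)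
    finally have r: "poly (smult (inverse (qvar ^ D - 1)) ([:1, qvar - 1:] ^ D - 1)) (qint n) = qsubst D (qint n)" .
    have "poly (pcompose (map_poly (qsubst D) Z) (smult (inverse (qvar ^ D - 1)) ([:1, qvar - 1:] ^ D - 1))) (qint n)
       = qsubst D (multichain_sum P h n)"
      unfolding poly_pcompose r poly_map_qsubst[OF assms(3)] using Z n by simp
    also have "\<dots> = multichain_sum P (\<lambda>x. D * h x) n"
      unfolding multichain_sum_def qsubst_sum[OF assms(3)] qsubst_qpow[OF assms(3)]
      by (rule sum.cong[OF refl]) (simp add: sum_list_const_mult)
    finally show "poly (pcompose (map_poly (qsubst D) Z) (smult (inverse (qvar ^ D - 1)) ([:1, qvar - 1:] ^ D - 1))) (qint n)
       = multichain_sum P (\<lambda>x. D * h x) n" .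
  qed
qed

end
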